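(* There exist absolute constants $K,\kappa>0$ such that the following holds. Let $\tilde c>0$ and $\tilde\xi\ge1$. Suppose that, for all $N$, all $m\ge1$, and all $m$-tuples $p,q$ of distinct integers in $[1,2N]$ with $|p-q|_1\ge N/8$, $$\mathbb E\Big[\prod_{a=1}^m|R_{p_a,q_a}|\Big]\le\tilde c^m\exp\big(-|p-q|_1/\tilde\xi\big).$$ Then multi-point dynamical localization holds with constants $C=K\tilde c\tilde\xi^2$ and $\xi=\kappa\tilde\xi$. That is, for all sufficiently large $N$, all $m\ge1$ and all strictly increasing $m$-tuples $p,q$ in $[1,2N]$ with $|p-q|_1\ge N/8$, $$\mathbb E|\det R[p,q]|\le C^me^{-N/\xi}.$$
   Context: $R=R(t)\in SO(2N)$ is a random orthogonal matrix, namely the Heisenberg evolution matrix of the Majorana operators at a fixed time $t$: $e^{iHt}c_pe^{-iHt}=\sum_qR_{p,q}c_q$ for a random quadratic Hamiltonian $H$. For $m$-tuples $p,q$, $|p-q|_1=\sum_{a=1}^m|p_a-q_a|$. For strictly increasing $p,q$, $R[p,q]$ is the $m\times m$ matrix with entries $R[p,q]_{a,b}=R_{p_a,q_b}$. $\mathbb E$ is the expectation over the randomness. *)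

theory Defs
  imports "HOL-Analysis.Analysis" "HOL-Probability.Probability"
begin

text \<open>Matrices are functions nat \<Rightarrow> nat \<Rightarrow> real, indices 1..n.
  Leibniz determinant of the n x n matrix (A i j), 1 \<le> i,j \<le> n.\<close>
definition ldet :: "nat \<Rightarrow> (nat \<Rightarrow> nat \<Rightarrow> real) \<Rightarrow> real" where
  "ldet n A = (\<Sum>\<sigma> | \<sigma> permutes {1..n}. of_int (sign \<sigma>) * (\<Prod>i=1..n. A i (\<sigma> i)))"

definition in_SO :: "nat \<Rightarrow> (nat \<times> nat \<Rightarrow> real) \<Rightarrow> bool" where
  "in_SO n A \<longleftrightarrow>
     (\<forall>i\<in>{1..n}. \<forall>j\<in>{1..n}. (\<Sum>k=1..n. A (i,k) * A (j,k)) = (if i = j then 1 else 0))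
     \<and> ldet n (\<lambda>i j. A (i,j)) = 1"

definition mat_space :: "nat \<Rightarrow> (nat \<times> nat \<Rightarrow> real) measure" where
  "mat_space N = Pi\<^sub>M ({1..2*N} \<times> {1..2*N}) (\<lambda>_. borel)"

definition l1dist :: "nat \<Rightarrow> (nat \<Rightarrow> nat) \<Rightarrow> (nat \<Rightarrow> nat) \<Rightarrow> real" where
  "l1dist m p q = (\<Sum>a=1..m. \<bar>real (p a) - real (q a)\<bar>)"

end

theory Submission imports Defs begin

lemma perm_bound:
  fixes w :: "nat \<Rightarrow> nat \<Rightarrow> real"
  assumes S: "finite S" and w: "\<And>a b. 0 \<le> w a b"
  shows "(\<Sum>\<sigma> | \<sigma> permutes S. \<Prod>a\<in>S. w a (\<sigma> a)) \<le> (\<Prod>a\<in>S. \<Sum>b\<in>S. w a b)"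
proof -
  have "(\<Prod>a\<in>S. \<Sum>b\<in>S. w a b) = (\<Sum>g\<in>PiE S (\<lambda>_. S). \<Prod>a\<in>S. w a (g a))"
    by (rule prod_sum_PiE) (use S in auto)
  moreover have "(\<Sum>\<sigma> | \<sigma> permutes S. \<Prod>a\<in>S. w a (\<sigma> a)) =
      (\<Sum>g\<in>(\<lambda>\<sigma>. restrict \<sigma> S) ` {\<sigma>. \<sigma> permutes S}. \<Prod>a\<in>S. w a (g a))"
  proof (subst sum.reindex)
    show "inj_on (\<lambda>\<sigma>. restrict \<sigma> S) {\<sigma>. \<sigma> permutes S}"
    proof (rule inj_onI)
      fix x y assume x: "x \<in> {\<sigma>. \<sigma> permutes S}" and y: "y \<in> {\<sigma>. \<sigma> permutes S}"
        and eq: "restrict x S = restrict y S"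
      show "x = y"
      proof (rule ext)
        fix z show "x z = y z"
        proof (cases "z \<in> S")
          case True then show ?thesis using fun_cong[OF eq, of z] by simp
        next
          case False then show ?thesis using x y by (simp add: permutes_not_in)
        qed
      qed
    qed
  qed (auto intro!: sum.cong prod.cong)
  moreover have "(\<Sum>g\<in>(\<lambda>\<sigma>. restrict \<sigma> S) ` {\<sigma>. \<sigma> permutes S}. \<Prod>a\<in>S. w a (g a))
     \<le> (\<Sum>g\<in>PiE S (\<lambda>_. S). \<Prod>a\<in>S. w a (g a))"
    apply (rule sum_mono2)
    using S apply (simp add: finite_PiE)
     apply (auto simp: permutes_in_image intro!: prod_nonneg w)
    done
  ultimately show ?thesis by simp
qed

lemma ind_abs:
  fixes x y B :: nat
  assumes "x \<in> {1..B}" "y \<in> {1..B}"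
  shows "\<bar>real x - real y\<bar> = (\<Sum>t\<in>{1..B}. \<bar>(of_bool (x \<le> t)::real) - of_bool (y \<le> t)\<bar>)"
proof -
  have gen: "\<bar>real x - real y\<bar> = (\<Sum>t\<in>{1..B}. \<bar>(of_bool (x \<le> t)::real) - of_bool (y \<le> t)\<bar>)"
    if "x \<le> y" "x \<in> {1..B}" "y \<in> {1..B}" for x y
  proof -
    have "(\<Sum>t\<in>{1..B}. \<bar>(of_bool (x \<le> t)::real) - of_bool (y \<le> t)\<bar>) =
        (\<Sum>t\<in>{1..B}. if t \<in> {x..<y} then 1 else 0)"
      using that(1) by (intro sum.cong) (auto split: if_splits)
    also have "\<dots> = (\<Sum>t\<in>{t\<in>{1..B}. t\<in>{x..<y}}. 1)"
      by (rule sum.inter_filter[symmetric]) simp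
    also have "{t\<in>{1..B}. t\<in>{x..<y}} = {x..<y}" using that by auto
    finally show ?thesis using that by simp
  qed
  show ?thesis
  proof (cases "x \<le> y")
    case True thus ?thesis using gen assms by blast
  next
    case False
    then show ?thesis using gen[of y x] assms by (simp add: abs_minus_commute)
  qed
qed

lemma sorted_eq:
  fixes p q :: "nat \<Rightarrow> nat"
  assumes p: "strict_mono_on {1..m} p" and q: "strict_mono_on {1..m} q"
  shows "(\<Sum>a\<in>{1..m}. \<bar>(of_bool (p a \<le> t)::real) - of_bool (q a \<le> t)\<bar>) =
     \<bar>(\<Sum>a\<in>{1..m}. (of_bool (p a \<le> t)::real)) - (\<Sum>a\<in>{1..m}. of_bool (q a \<le> t))\<bar>"
proof -
  have dc: "f b \<le> f a" if f: "strict_mono_on {1..m} f" and a: "a \<in> {1..m}" and b: "b \<in> {1..m}" and ba: "b \<le> a"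
    for f :: "nat \<Rightarrow> nat" and a b :: nat
  proof (cases "b = a")
    case True thus ?thesis by simp
  next
    case False
    hence "b < a" using ba by simp
    thus ?thesis using strict_mono_onD[OF f b a] by simp
  qed
  have "(\<forall>a\<in>{1..m}. q a \<le> t \<longrightarrow> p a \<le> t) \<or> (\<forall>a\<in>{1..m}. p a \<le> t \<longrightarrow> q a \<le> t)"
  proof (rule ccontr)
    assume "\<not> ?thesis"
    then obtain a b where a: "a \<in> {1..m}" "q a \<le> t" "\<not> p a \<le> t" and b: "b \<in> {1..m}" "p b \<le> t" "\<not> q b \<le> t"
      by blast
    show False
    proof (cases "a \<le> b")
      case True
      have "p a \<le> p b" using dc[OF p b(1) a(1) True] .
      thus False using a b by simp
    next
      case False
      hence "b \<le> a" by simp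
      have "q b \<le> q a" using dc[OF q a(1) b(1) \<open>b \<le> a\<close>] .
      thus False using a b by simp
    qed
  qed
  then show ?thesis
  proof
    assume h: "\<forall>a\<in>{1..m}. q a \<le> t \<longrightarrow> p a \<le> t"
    have "(\<Sum>a\<in>{1..m}. \<bar>(of_bool (p a \<le> t)::real) - of_bool (q a \<le> t)\<bar>) =
       (\<Sum>a\<in>{1..m}. (of_bool (p a \<le> t)::real) - of_bool (q a \<le> t))"
      using h by (intro sum.cong) auto
    moreover have "0 \<le> (\<Sum>a\<in>{1..m}. (of_bool (p a \<le> t)::real) - of_bool (q a \<le> t))"
      using h by (intro sum_nonneg) auto
    ultimately show ?thesis by (simp add: sum_subtractf)
  next
    assume h: "\<forall>a\<in>{1..m}. p a \<le> t \<longrightarrow> q a \<le> t"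
    have "(\<Sum>a\<in>{1..m}. \<bar>(of_bool (p a \<le> t)::real) - of_bool (q a \<le> t)\<bar>) =
       (\<Sum>a\<in>{1..m}. (of_bool (q a \<le> t)::real) - of_bool (p a \<le> t))"
      using h by (intro sum.cong) auto
    moreover have "0 \<le> (\<Sum>a\<in>{1..m}. (of_bool (q a \<le> t)::real) - of_bool (p a \<le> t))"
      using h by (intro sum_nonneg) auto
    ultimately show ?thesis by (simp add: sum_subtractf)
  qed
qed

lemma rearr:
  fixes p q :: "nat \<Rightarrow> nat"
  assumes p: "strict_mono_on {1..m} p" and q: "strict_mono_on {1..m} q"
    and \<sigma>: "\<sigma> permutes {1..m}"
    and rng: "\<forall>a\<in>{1..m}. p a \<in> {1..B} \<and> q a \<in> {1..B}"
  shows "l1dist m p q \<le> l1dist m p (q \<circ> \<sigma>)"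
proof -
  let ?I = "\<lambda>x t. (of_bool (x \<le> t)::real)"
  have s: "\<sigma> a \<in> {1..m}" if "a \<in> {1..m}" for a using permutes_in_image[OF \<sigma>] that by auto
  have "l1dist m p q = (\<Sum>a\<in>{1..m}. \<Sum>t\<in>{1..B}. \<bar>?I (p a) t - ?I (q a) t\<bar>)"
    unfolding l1dist_def using rng by (intro sum.cong refl ind_abs) auto
  also have "\<dots> = (\<Sum>t\<in>{1..B}. \<Sum>a\<in>{1..m}. \<bar>?I (p a) t - ?I (q a) t\<bar>)" by (rule sum.swap)
  also have "\<dots> = (\<Sum>t\<in>{1..B}. \<bar>(\<Sum>a\<in>{1..m}. ?I (p a) t) - (\<Sum>a\<in>{1..m}. ?I (q a) t)\<bar>)"
    by (intro sum.cong refl sorted_eq p q)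
  also have "\<dots> = (\<Sum>t\<in>{1..B}. \<bar>(\<Sum>a\<in>{1..m}. ?I (p a) t) - (\<Sum>a\<in>{1..m}. ?I (q (\<sigma> a)) t)\<bar>)"
    using sum.permute[OF \<sigma>, of "\<lambda>a. ?I (q a) _"] by (simp add: comp_def)
  also have "\<dots> \<le> (\<Sum>t\<in>{1..B}. \<Sum>a\<in>{1..m}. \<bar>?I (p a) t - ?I (q (\<sigma> a)) t\<bar>)"
    apply (intro sum_mono)
    apply (subst sum_subtractf[symmetric])
    apply (rule sum_abs)
    done
  also have "\<dots> = (\<Sum>a\<in>{1..m}. \<Sum>t\<in>{1..B}. \<bar>?I (p a) t - ?I (q (\<sigma> a)) t\<bar>)" by (rule sum.swap)
  also have "\<dots> = l1dist m p (q \<circ> \<sigma>)"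
    unfolding l1dist_def comp_def apply (rule sum.cong[OF refl]) apply (rule ind_abs[symmetric]) using rng s by auto
  finally show ?thesis .
qed


lemma geo_inj:
  fixes r :: real and g :: "nat \<Rightarrow> nat"
  assumes "finite Q" "inj_on g Q" "0 \<le> r" "r < 1"
  shows "(\<Sum>y\<in>Q. r ^ g y) \<le> 1 / (1 - r)"
proof -
  have "(\<Sum>y\<in>Q. r ^ g y) = (\<Sum>k\<in>g ` Q. r ^ k)"
    using assms by (simp add: sum.reindex)
  also have "\<dots> \<le> (\<Sum>k. r ^ k)"
    by (rule sum_le_suminf) (use assms in \<open>auto intro!: summable_geometric\<close>)
  also have "\<dots> = 1 / (1 - r)" using assms by (intro suminf_geometric) auto
  finally show ?thesis .
qed

lemma row_bound:
  fixes x :: nat and Q :: "nat set" and \<xi> :: real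
  assumes Q: "finite Q" and xi: "\<xi> \<ge> 1"
  shows "(\<Sum>y\<in>Q. exp (- \<bar>real x - real y\<bar> / (2*\<xi>))) \<le> 6 * \<xi>"
proof -
  define u where "u = 1 / (2*\<xi>)"
  define r where "r = exp (- u)"
  have u: "u > 0" using xi by (simp add: u_def)
  have r0: "0 \<le> r" "r < 1" using u by (auto simp: r_def)
  have ex: "exp (- real k / (2*\<xi>)) = r ^ k" for k :: nat
  proof -
    have "- real k / (2*\<xi>) = real k * (- u)" by (simp add: u_def)
    then show ?thesis by (metis r_def exp_of_nat_mult)
  qed
  have geo: "1 / (1 - r) \<le> 1 + 2*\<xi>"
  proof -
    have "exp u \<ge> 1 + u" by (rule exp_ge_add_one_self)
    hence "r \<le> 1 / (1 + u)" using u by (simp add: r_def exp_minus field_simps)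
    hence "1 - r \<ge> u / (1 + u)" using u by (simp add: field_simps)
    moreover have "0 < u / (1 + u)" using u by simp
    moreover have "0 < (1 - r) * (u / (1 + u))"
      using r0(2) \<open>0 < u / (1 + u)\<close> by (intro mult_pos_pos) auto
    ultimately have "1 / (1 - r) \<le> 1 / (u / (1 + u))"
      by (intro divide_left_mono) auto
    also have "1 / (u / (1 + u)) = (1 + u) / u" by simp
    also have "(1 + u) / u = 1 + 2*\<xi>" using xi by (simp add: u_def field_simps)
    finally show ?thesis .
  qed
  let ?f = "\<lambda>y. exp (- \<bar>real x - real y\<bar> / (2*\<xi>))"
  have "(\<Sum>y\<in>Q. ?f y) = (\<Sum>y\<in>{y\<in>Q. x \<le> y}. ?f y) + (\<Sum>y\<in>{y\<in>Q. \<not> x \<le> y}. ?f y)"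
  proof -
    have "(\<Sum>y\<in>Q. ?f y) = (\<Sum>y\<in>Q \<inter> {y. x \<le> y}. ?f y) + (\<Sum>y\<in>Q - {y. x \<le> y}. ?f y)"
      using Q by (rule sum.Int_Diff)
    moreover have "Q \<inter> {y. x \<le> y} = {y\<in>Q. x \<le> y}" "Q - {y. x \<le> y} = {y\<in>Q. \<not> x \<le> y}" by auto
    ultimately show ?thesis by simp
  qed
  also have "(\<Sum>y\<in>{y\<in>Q. x \<le> y}. ?f y) = (\<Sum>y\<in>{y\<in>Q. x \<le> y}. r ^ (y - x))"
  proof (rule sum.cong[OF refl])
    fix y assume "y \<in> {y\<in>Q. x \<le> y}"
    hence "\<bar>real x - real y\<bar> = real (y - x)" by auto
    thus "?f y = r ^ (y - x)" using ex[of "y - x"] by (simp only:)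
  qed
  also have "(\<Sum>y\<in>{y\<in>Q. \<not> x \<le> y}. ?f y) = (\<Sum>y\<in>{y\<in>Q. \<not> x \<le> y}. r ^ (x - y))"
  proof (rule sum.cong[OF refl])
    fix y assume "y \<in> {y\<in>Q. \<not> x \<le> y}"
    hence "\<bar>real x - real y\<bar> = real (x - y)" by auto
    thus "?f y = r ^ (x - y)" using ex[of "x - y"] by (simp only:)
  qed
  also have "(\<Sum>y\<in>{y\<in>Q. x \<le> y}. r ^ (y - x)) \<le> 1 / (1 - r)"
    using Q r0 by (intro geo_inj) (auto simp: inj_on_def)
  also have "(\<Sum>y\<in>{y\<in>Q. \<not> x \<le> y}. r ^ (x - y)) \<le> 1 / (1 - r)"
    using Q r0 by (intro geo_inj) (auto simp: inj_on_def)
  finally show ?thesis using geo xi by linarith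
qed


theorem mainTheorem11:
  shows "\<exists>K \<kappa> :: real. K > 0 \<and> \<kappa> > 0 \<and>
    (\<forall>(M :: nat \<Rightarrow> (nat \<times> nat \<Rightarrow> real) measure) (c :: real) (\<xi> :: real).
      c > 0 \<longrightarrow> \<xi> \<ge> 1 \<longrightarrow>
      (\<forall>N. prob_space (M N) \<and> sets (M N) = sets (mat_space N)
            \<and> (AE R in M N. in_SO (2*N) R)) \<longrightarrow>
      (\<forall>N m (p :: nat \<Rightarrow> nat) (q :: nat \<Rightarrow> nat). m \<ge> 1 \<longrightarrow>
          (\<forall>a\<in>{1..m}. p a \<in> {1..2*N} \<and> q a \<in> {1..2*N}) \<longrightarrow>
          inj_on p {1..m} \<longrightarrow> inj_on q {1..m} \<longrightarrow>
          l1dist m p q \<ge> real N / 8 \<longrightarrow>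
          (\<integral>R. (\<Prod>a=1..m. \<bar>R (p a, q a)\<bar>) \<partial>M N) \<le> c ^ m * exp (- l1dist m p q / \<xi>)) \<longrightarrow>
      (\<exists>N0. \<forall>N \<ge> N0. \<forall>m (p :: nat \<Rightarrow> nat) (q :: nat \<Rightarrow> nat). m \<ge> 1 \<longrightarrow>
          (\<forall>a\<in>{1..m}. p a \<in> {1..2*N} \<and> q a \<in> {1..2*N}) \<longrightarrow>
          strict_mono_on {1..m} p \<longrightarrow> strict_mono_on {1..m} q \<longrightarrow>
          l1dist m p q \<ge> real N / 8 \<longrightarrow>
          (\<integral>R. \<bar>ldet m (\<lambda>a b. R (p a, q b))\<bar> \<partial>M N)
            \<le> (K * c * \<xi>\<^sup>2) ^ m * exp (- real N / (\<kappa> * \<xi>))))"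
proof (rule exI[of _ "6::real"], rule exI[of _ "16::real"], intro conjI allI impI)
  fix M :: "nat \<Rightarrow> (nat \<times> nat \<Rightarrow> real) measure" and c \<xi> :: real
  assume hc: "c > 0" and hxi: "\<xi> \<ge> 1"
    and hM: "\<forall>N. prob_space (M N) \<and> sets (M N) = sets (mat_space N) \<and> (AE R in M N. in_SO (2*N) R)"
    and hyp: "\<forall>N m (p :: nat \<Rightarrow> nat) (q :: nat \<Rightarrow> nat). m \<ge> 1 \<longrightarrow>
          (\<forall>a\<in>{1..m}. p a \<in> {1..2*N} \<and> q a \<in> {1..2*N}) \<longrightarrow>
          inj_on p {1..m} \<longrightarrow> inj_on q {1..m} \<longrightarrow>
          l1dist m p q \<ge> real N / 8 \<longrightarrow>
          (\<integral>R. (\<Prod>a=1..m. \<bar>R (p a, q a)\<bar>) \<partial>M N) \<le> c ^ m * exp (- l1dist m p q / \<xi>)"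
  show "\<exists>N0. \<forall>N \<ge> N0. \<forall>m (p :: nat \<Rightarrow> nat) (q :: nat \<Rightarrow> nat). m \<ge> 1 \<longrightarrow>
          (\<forall>a\<in>{1..m}. p a \<in> {1..2*N} \<and> q a \<in> {1..2*N}) \<longrightarrow>
          strict_mono_on {1..m} p \<longrightarrow> strict_mono_on {1..m} q \<longrightarrow>
          l1dist m p q \<ge> real N / 8 \<longrightarrow>
          (\<integral>R. \<bar>ldet m (\<lambda>a b. R (p a, q b))\<bar> \<partial>M N)
            \<le> (6 * c * \<xi>\<^sup>2) ^ m * exp (- real N / (16 * \<xi>))"
  proof (intro exI[of _ 0] allI impI)
    fix N m :: nat and p q :: "nat \<Rightarrow> nat"
    assume m1: "m \<ge> 1" and rng: "\<forall>a\<in>{1..m}. p a \<in> {1..2*N} \<and> q a \<in> {1..2*N}"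
      and pm: "strict_mono_on {1..m} p" and qm: "strict_mono_on {1..m} q"
      and dist: "l1dist m p q \<ge> real N / 8"
    interpret P: prob_space "M N" using hM by blast
    have sets: "sets (M N) = sets (mat_space N)" using hM by blast
    let ?S = "{1..m}"
    let ?P = "{\<sigma>. \<sigma> permutes ?S}"
    define f where "f \<sigma> R = (\<Prod>a\<in>?S. \<bar>R (p a, q (\<sigma> a))\<bar>)" for \<sigma> and R :: "nat \<times> nat \<Rightarrow> real"
    have finP: "finite ?P" by (simp add: finite_permutations)
    have sin: "\<sigma> a \<in> ?S" if "\<sigma> \<in> ?P" "a \<in> ?S" for \<sigma> a
      using permutes_in_image[of \<sigma> ?S a] that by auto
    have meas: "(\<lambda>R. R (i,j)) \<in> borel_measurable (M N)" if "i \<in> {1..2*N}" "j \<in> {1..2*N}" for i j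
    proof -
      have "(\<lambda>R. R (i,j)) \<in> borel_measurable (mat_space N)"
        unfolding mat_space_def using that by (intro measurable_component_singleton) auto
      then show ?thesis using measurable_cong_sets[OF sets refl] by blast
    qed
    have measf: "f \<sigma> \<in> borel_measurable (M N)" if "\<sigma> \<in> ?P" for \<sigma>
      unfolding f_def using rng sin[OF that]
      by (intro borel_measurable_prod borel_measurable_abs meas) auto
    have aeSO: "AE R in M N. in_SO (2*N) R" using hM by blast
    have AEb: "AE R in M N. \<forall>i\<in>{1..2*N}. \<forall>j\<in>{1..2*N}. \<bar>R (i,j)\<bar> \<le> 1"
      using aeSO
    proof eventually_elim
      case (elim R)
      show ?case
      proof (intro ballI)
        fix i j assume i: "i \<in> {1..2*N}" and j: "j \<in> {1..2*N}"
        have "(\<Sum>k=1..2*N. R (i,k) * R (i,k)) = 1" using elim i unfolding in_SO_def by auto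
        moreover have "R (i,j) * R (i,j) \<le> (\<Sum>k=1..2*N. R (i,k) * R (i,k))"
          using j by (intro member_le_sum) auto
        ultimately have "(R (i,j))\<^sup>2 \<le> 1" by (simp add: power2_eq_square)
        thus "\<bar>R (i,j)\<bar> \<le> 1" by (simp add: abs_square_le_1)
      qed
    qed
    have intf: "integrable (M N) (f \<sigma>)" if "\<sigma> \<in> ?P" for \<sigma>
    proof (rule P.integrable_const_bound[where B=1])
      show "AE x in M N. norm (f \<sigma> x) \<le> 1"
        using AEb
      proof eventually_elim
        case (elim R)
        have "f \<sigma> R \<le> 1" unfolding f_def
          using elim rng sin[OF that] by (intro prod_le_1) auto
        moreover have "f \<sigma> R \<ge> 0" unfolding f_def by (intro prod_nonneg) auto
        ultimately show ?case by simp
      qed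
    qed (rule measf[OF that])
    let ?D = "\<lambda>R. ldet m (\<lambda>a b. R (p a, q b))"
    have measg: "(\<lambda>R. \<Prod>i=1..m. R (p i, q (\<sigma> i))) \<in> borel_measurable (M N)" if "\<sigma> \<in> ?P" for \<sigma>
      using rng sin[OF that] by (intro borel_measurable_prod meas) auto
    have measD: "(\<lambda>R. \<bar>?D R\<bar>) \<in> borel_measurable (M N)"
      unfolding ldet_def
      by (intro borel_measurable_abs borel_measurable_sum borel_measurable_times borel_measurable_const
          measg) simp
    have ptw: "\<bar>?D R\<bar> \<le> (\<Sum>\<sigma>\<in>?P. f \<sigma> R)" for R
    proof -
      have "\<bar>?D R\<bar> \<le> (\<Sum>\<sigma>\<in>?P. \<bar>of_int (sign \<sigma>) * (\<Prod>i=1..m. R (p i, q (\<sigma> i)))\<bar>)"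
        unfolding ldet_def by (rule sum_abs)
      also have "\<dots> = (\<Sum>\<sigma>\<in>?P. f \<sigma> R)"
        unfolding f_def by (intro sum.cong refl) (simp add: abs_mult abs_prod sign_def)
      finally show ?thesis .
    qed
    have intS: "integrable (M N) (\<lambda>R. \<Sum>\<sigma>\<in>?P. f \<sigma> R)" using intf by auto
    have intD: "integrable (M N) (\<lambda>R. \<bar>?D R\<bar>)"
    proof (rule Bochner_Integration.integrable_bound[OF intS measD])
      show "AE R in M N. norm \<bar>?D R\<bar> \<le> norm (\<Sum>\<sigma>\<in>?P. f \<sigma> R)"
      proof (rule AE_I2)
        fix R
        show "norm \<bar>?D R\<bar> \<le> norm (\<Sum>\<sigma>\<in>?P. f \<sigma> R)"
          using order_trans[OF ptw[of R] abs_ge_self] by simp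
      qed
    qed
    have "(\<integral>R. \<bar>?D R\<bar> \<partial>M N) \<le> (\<integral>R. (\<Sum>\<sigma>\<in>?P. f \<sigma> R) \<partial>M N)"
      by (rule integral_mono[OF intD intS ptw])
    also have "\<dots> = (\<Sum>\<sigma>\<in>?P. \<integral>R. f \<sigma> R \<partial>M N)"
      by (rule Bochner_Integration.integral_sum) (use intf in auto)
    also have "\<dots> \<le> (\<Sum>\<sigma>\<in>?P. c ^ m * exp (- l1dist m p (q \<circ> \<sigma>) / \<xi>))"
    proof (rule sum_mono)
      fix \<sigma> assume s: "\<sigma> \<in> ?P"
      have injp: "inj_on p ?S" using pm by (rule strict_mono_on_imp_inj_on)
      have injq: "inj_on (q \<circ> \<sigma>) ?S"
        using strict_mono_on_imp_inj_on[OF qm] s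
        by (metis (no_types, lifting) comp_inj_on mem_Collect_eq permutes_image permutes_inj_on)
      have "l1dist m p q \<le> l1dist m p (q \<circ> \<sigma>)" using rearr[OF pm qm _ rng] s by auto
      hence d: "l1dist m p (q \<circ> \<sigma>) \<ge> real N / 8" using dist by linarith
      have r2: "\<forall>a\<in>{1..m}. p a \<in> {1..2*N} \<and> (q \<circ> \<sigma>) a \<in> {1..2*N}"
        using rng sin[OF s] by auto
      have "(\<integral>R. (\<Prod>a=1..m. \<bar>R (p a, (q \<circ> \<sigma>) a)\<bar>) \<partial>M N) \<le> c ^ m * exp (- l1dist m p (q \<circ> \<sigma>) / \<xi>)"
        by (rule hyp[rule_format, OF m1 r2[rule_format] injp injq d])
      then show "(\<integral>R. f \<sigma> R \<partial>M N) \<le> c ^ m * exp (- l1dist m p (q \<circ> \<sigma>) / \<xi>)"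
        unfolding f_def comp_def .
    qed
    also have "\<dots> \<le> (\<Sum>\<sigma>\<in>?P. c ^ m * (exp (- real N / (16 * \<xi>)) *
          (\<Prod>a\<in>?S. exp (- \<bar>real (p a) - real (q (\<sigma> a))\<bar> / (2*\<xi>)))))"
    proof (rule sum_mono)
      fix \<sigma> assume s: "\<sigma> \<in> ?P"
      let ?d = "l1dist m p (q \<circ> \<sigma>)"
      have "l1dist m p q \<le> ?d" using rearr[OF pm qm _ rng] s by auto
      hence d: "?d \<ge> real N / 8" using dist by linarith
      have "- ?d / \<xi> = - ?d / (2*\<xi>) + - ?d / (2*\<xi>)" by (simp add: field_simps)
      hence e1: "exp (- ?d / \<xi>) = exp (- ?d / (2*\<xi>)) * exp (- ?d / (2*\<xi>))"
        by (simp only: exp_add)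
      have e2: "exp (- ?d / (2*\<xi>)) \<le> exp (- real N / (16 * \<xi>))"
        using d hxi by (simp add: field_simps)
      have e3: "exp (- ?d / (2*\<xi>)) = (\<Prod>a\<in>?S. exp (- \<bar>real (p a) - real (q (\<sigma> a))\<bar> / (2*\<xi>)))"
        unfolding l1dist_def by (simp add: exp_sum[symmetric] sum_negf sum_divide_distrib)
      have "exp (- ?d / \<xi>) \<le> exp (- real N / (16 * \<xi>)) * exp (- ?d / (2*\<xi>))"
        unfolding e1 by (rule mult_right_mono[OF e2]) simp
      hence "exp (- ?d / \<xi>) \<le> exp (- real N / (16 * \<xi>)) *
          (\<Prod>a\<in>?S. exp (- \<bar>real (p a) - real (q (\<sigma> a))\<bar> / (2*\<xi>)))"
        by (simp only: e3)
      then show "c ^ m * exp (- ?d / \<xi>) \<le> c ^ m * (exp (- real N / (16 * \<xi>)) *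
          (\<Prod>a\<in>?S. exp (- \<bar>real (p a) - real (q (\<sigma> a))\<bar> / (2*\<xi>))))"
        using hc by (intro mult_left_mono) auto
    qed
    also have "\<dots> = c ^ m * exp (- real N / (16 * \<xi>)) *
        (\<Sum>\<sigma>\<in>?P. \<Prod>a\<in>?S. exp (- \<bar>real (p a) - real (q (\<sigma> a))\<bar> / (2*\<xi>)))"
      by (simp add: sum_distrib_left mult.assoc)
    also have "\<dots> \<le> c ^ m * exp (- real N / (16 * \<xi>)) *
        (\<Prod>a\<in>?S. \<Sum>b\<in>?S. exp (- \<bar>real (p a) - real (q b)\<bar> / (2*\<xi>)))"
      using hc by (intro mult_left_mono perm_bound) auto
    also have "\<dots> \<le> c ^ m * exp (- real N / (16 * \<xi>)) * (\<Prod>a\<in>?S. 6 * \<xi>)"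
    proof (intro mult_left_mono prod_mono conjI)
      fix a assume "a \<in> ?S"
      have injq: "inj_on q ?S" using qm by (rule strict_mono_on_imp_inj_on)
      have "(\<Sum>b\<in>?S. exp (- \<bar>real (p a) - real (q b)\<bar> / (2*\<xi>))) =
          (\<Sum>y\<in>q ` ?S. exp (- \<bar>real (p a) - real y\<bar> / (2*\<xi>)))"
        using injq by (simp add: sum.reindex)
      also have "\<dots> \<le> 6 * \<xi>" by (rule row_bound) (use hxi in auto)
      finally show "(\<Sum>b\<in>?S. exp (- \<bar>real (p a) - real (q b)\<bar> / (2*\<xi>))) \<le> 6 * \<xi>" .
    qed (use hc in \<open>auto intro: sum_nonneg\<close>)
    also have "\<dots> = (6 * c * \<xi>) ^ m * exp (- real N / (16 * \<xi>))"
      by (simp add: power_mult_distrib)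
    also have "\<dots> \<le> (6 * c * \<xi>\<^sup>2) ^ m * exp (- real N / (16 * \<xi>))"
    proof (intro mult_right_mono power_mono)
      show "6 * c * \<xi> \<le> 6 * c * \<xi>\<^sup>2" using hc hxi
        by (intro mult_left_mono) (auto simp: power2_eq_square)
    qed (use hc hxi in auto)
    finally show "(\<integral>R. \<bar>ldet m (\<lambda>a b. R (p a, q b))\<bar> \<partial>M N)
            \<le> (6 * c * \<xi>\<^sup>2) ^ m * exp (- real N / (16 * \<xi>))" .
  qed
qed auto

end
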